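(* Let $d=3$ and let $\mathbf{u}\in C^1([0,T);V^m)$, $m\ge1$, be a strong solution of the Euler equations on $\mathbb{\Lambda}^3$. Let $\mathbf{h}\in C^1([0,T);V^m)$ be a divergence-free field satisfying $\partial_t\mathbf{h}+\mathbf{u}\ast\nabla\mathbf{h}-\mathbf{h}\ast\nabla\mathbf{u}=\mathbf{0}$ for all $\mathbf{k}\neq\mathbf{0}$ and $t\in[0,T)$. Then the cross-correlation $\Gamma(t)=(\mathbf{u},\mathbf{h})$ is constant in $t\in[0,T)$.
   Context: Let $\lambda$ be one of: $2$; the plastic number $\sigma$ (unique real root of $x^3-x-1=0$); or $\lambda>1$ with $\lambda^b-\lambda^a=1$ for mutually prime integers $0\le a<b\le62$, $(a,b)\notin\{(1,3),(4,5)\}$. Let $\mathbb{\Lambda}=\{0\}\cup\{\pm\lambda^n:n=0,1,2,\dots\}$. Fields on $\mathbb{\Lambda}^3$ satisfy $f(-\mathbf{k})=\overline{f(\mathbf{k})}$. Derivatives $(\partial_jf)(\mathbf{k})=ik_jf(\mathbf{k})$, $(\nabla p)(\mathbf{k})=i\mathbf{k}p(\mathbf{k})$, $(\nabla\cdot\mathbf{u})(\mathbf{k})=i\mathbf{k}\cdot\mathbf{u}(\mathbf{k})$. Inner product $(\mathbf{u},\mathbf{h})=\sum_{\mathbf{k}}\sum_i u_i(\mathbf{k})\overline{h_i(\mathbf{k})}$. Product $(f\ast g)(\mathbf{k})=\sum_{\mathbf{p}+\mathbf{q}=\mathbf{k},\,\mathbf{p},\mathbf{q}\in\mathbb{\Lambda}^3}f(\mathbf{p})g(\mathbf{q})$;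 $(\mathbf{a}\ast\nabla\mathbf{b})_i=\sum_j a_j\ast\partial_jb_i$. For integer $m\ge0$, $\|\mathbf{u}\|_{h^m}^2=\sum_{\mathbf{k}\neq\mathbf{0}}|\mathbf{k}|^{2m}|\mathbf{u}(\mathbf{k})|^2$; $V^m$ is the space of fields with $\mathbf{u}(\mathbf{0})=\mathbf{0}$, $\nabla\cdot\mathbf{u}=0$ and finite $h^m$ norm. A strong solution of the Euler equations on $[0,T)$ is $\mathbf{u}\in C^1([0,T);V^m)$ together with a scalar field $p(\cdot,t)$ such that $\partial_t\mathbf{u}+\mathbf{u}\ast\nabla\mathbf{u}=-\nabla p$ holds for all $\mathbf{k}\neq\mathbf{0}$ and $t\in[0,T)$. *)

theory Defs
  imports "HOL-Analysis.Analysis"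
begin

definition admissible_lambda :: "real \<Rightarrow> bool" where
  "admissible_lambda lam \<longleftrightarrow>
     lam = 2
   \<or> lam ^ 3 - lam - 1 = 0
   \<or> (\<exists>a b :: nat. coprime a b \<and> a < b \<and> b \<le> 62 \<and> (a, b) \<notin> {(1, 3), (4, 5)}
                   \<and> lam > 1 \<and> lam ^ b - lam ^ a = 1)"

definition Lam :: "real \<Rightarrow> real set" where
  "Lam lam = {0} \<union> {x. \<exists>n::nat. x = lam ^ n \<or> x = - (lam ^ n)}"

definition Lam3 :: "real \<Rightarrow> (real^3) set" where
  "Lam3 lam = {k. \<forall>i. k $ i \<in> Lam lam}"

text \<open>Vector fields on the lattice: functions real^3 => complex^3 (only values on Lam3 matter);
  scalar fields: real^3 => complex.\<close>

definition reality_vec :: "real \<Rightarrow> (real^3 \<Rightarrow> complex^3) \<Rightarrow> bool" where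
  "reality_vec lam u \<longleftrightarrow> (\<forall>k \<in> Lam3 lam. u (- k) = (\<chi> i. cnj (u k $ i)))"

definition reality_scal :: "real \<Rightarrow> (real^3 \<Rightarrow> complex) \<Rightarrow> bool" where
  "reality_scal lam f \<longleftrightarrow> (\<forall>k \<in> Lam3 lam. f (- k) = cnj (f k))"

definition conv :: "real \<Rightarrow> (real^3 \<Rightarrow> complex) \<Rightarrow> (real^3 \<Rightarrow> complex) \<Rightarrow> real^3 \<Rightarrow> complex" where
  "conv lam f g k = (\<Sum>\<^sub>\<infinity>p \<in> {p \<in> Lam3 lam. k - p \<in> Lam3 lam}. f p * g (k - p))"

text \<open>(a * grad b)_i = sum_j a_j * (partial_j b_i), with (partial_j f)(k) = i k_j f(k).\<close>
definition adv :: "real \<Rightarrow> (real^3 \<Rightarrow> complex^3) \<Rightarrow> (real^3 \<Rightarrow> complex^3) \<Rightarrow> real^3 \<Rightarrow> complex^3" where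
  "adv lam a b k = (\<chi> i. \<Sum>j\<in>UNIV. conv lam (\<lambda>p. a p $ j) (\<lambda>q. \<i> * complex_of_real (q $ j) * (b q $ i)) k)"

definition divergence :: "(real^3 \<Rightarrow> complex^3) \<Rightarrow> real^3 \<Rightarrow> complex" where
  "divergence u k = \<i> * (\<Sum>j\<in>UNIV. complex_of_real (k $ j) * u k $ j)"

definition grad :: "(real^3 \<Rightarrow> complex) \<Rightarrow> real^3 \<Rightarrow> complex^3" where
  "grad p k = (\<chi> j. \<i> * complex_of_real (k $ j) * p k)"

definition inner_field :: "real \<Rightarrow> (real^3 \<Rightarrow> complex^3) \<Rightarrow> (real^3 \<Rightarrow> complex^3) \<Rightarrow> complex" where
  "inner_field lam u h = (\<Sum>\<^sub>\<infinity>k \<in> Lam3 lam. \<Sum>i\<in>UNIV. u k $ i * cnj (h k $ i))"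

definition hm_summand :: "nat \<Rightarrow> (real^3 \<Rightarrow> complex^3) \<Rightarrow> real^3 \<Rightarrow> real" where
  "hm_summand m u k = norm k ^ (2 * m) * (norm (u k))\<^sup>2"

definition hm_finite :: "real \<Rightarrow> nat \<Rightarrow> (real^3 \<Rightarrow> complex^3) \<Rightarrow> bool" where
  "hm_finite lam m u \<longleftrightarrow> hm_summand m u summable_on (Lam3 lam - {0})"

definition hm_norm :: "real \<Rightarrow> nat \<Rightarrow> (real^3 \<Rightarrow> complex^3) \<Rightarrow> real" where
  "hm_norm lam m u = sqrt (\<Sum>\<^sub>\<infinity>k \<in> Lam3 lam - {0}. hm_summand m u k)"

definition Vm :: "real \<Rightarrow> nat \<Rightarrow> (real^3 \<Rightarrow> complex^3) \<Rightarrow> bool" where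
  "Vm lam m u \<longleftrightarrow> reality_vec lam u \<and> u 0 = 0
     \<and> (\<forall>k \<in> Lam3 lam. divergence u k = 0) \<and> hm_finite lam m u"

definition time_int :: "ereal \<Rightarrow> real set" where
  "time_int T = {t. 0 \<le> t \<and> ereal t < T}"

definition C1_Vm :: "real \<Rightarrow> nat \<Rightarrow> ereal \<Rightarrow> (real \<Rightarrow> real^3 \<Rightarrow> complex^3)
                      \<Rightarrow> (real \<Rightarrow> real^3 \<Rightarrow> complex^3) \<Rightarrow> bool" where
  "C1_Vm lam m T u u' \<longleftrightarrow>
    (\<forall>t \<in> time_int T.
       Vm lam m (u t) \<and> Vm lam m (u' t)
     \<and> ((\<lambda>s. hm_norm lam m (\<lambda>k. (u s k - u t k) /\<^sub>R (s - t) - u' t k)) \<longlongrightarrow> 0)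
          (at t within time_int T)
     \<and> ((\<lambda>s. hm_norm lam m (\<lambda>k. u' s k - u' t k)) \<longlongrightarrow> 0) (at t within time_int T))"

end

theory Submission
  imports Defs
begin

lemma cubic_gt1: fixes lam :: real assumes e: "lam ^ 3 - lam - 1 = 0" shows "lam > 1"
proof (rule ccontr)
  assume "\<not> lam > 1"
  hence le: "lam \<le> 1" by simp
  have eq: "lam ^ 3 - lam = lam * ((lam - 1) * (lam + 1))" by (simp add: power3_eq_cube algebra_simps)
  have "lam * ((lam - 1) * (lam + 1)) < 1"
  proof (cases "lam \<ge> 0")
    case True
    have "(lam - 1) * (lam + 1) \<le> 0" using le True by (simp add: mult_nonpos_nonneg)
    hence "lam * ((lam - 1) * (lam + 1)) \<le> 0" using True by (simp add: mult_nonneg_nonpos)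
    thus ?thesis by simp
  next
    case False
    show ?thesis
    proof (cases "lam \<le> -1")
      case True
      have "(lam - 1) * (lam + 1) \<ge> 0" using True by (simp add: mult_nonpos_nonpos)
      hence "lam * ((lam - 1) * (lam + 1)) \<le> 0" using False by (simp add: mult_nonpos_nonneg)
      thus ?thesis by simp
    next
      case f2: False
      have a: "0 \<le> (1 - lam) * (lam + 1)" using f2 le by simp
      have b: "(1 - lam) * (lam + 1) \<le> 1" by (simp add: algebra_simps)
      have "(-lam) * ((1 - lam) * (lam + 1)) \<le> (-lam) * 1"
        using a b False by (intro mult_left_mono) auto
      moreover have "lam * ((lam - 1) * (lam + 1)) = (-lam) * ((1 - lam) * (lam + 1))" by (simp add: algebra_simps)
      ultimately show ?thesis using f2 by simp
    qed
  qed
  thus False using e eq by simp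
qed

lemma adm_gt1: assumes "admissible_lambda lam" shows "lam > 1"
  using assms cubic_gt1 unfolding admissible_lambda_def by auto

lemma Lam_uminus: "x \<in> Lam lam \<Longrightarrow> - x \<in> Lam lam"
  unfolding Lam_def by auto

lemma Lam_ge1: "lam \<ge> 1 \<Longrightarrow> x \<in> Lam lam \<Longrightarrow> x \<noteq> 0 \<Longrightarrow> \<bar>x\<bar> \<ge> 1"
  unfolding Lam_def by auto

lemma Lam3_0: "0 \<in> Lam3 lam"
  unfolding Lam3_def Lam_def by auto

lemma Lam3_uminus: "k \<in> Lam3 lam \<Longrightarrow> - k \<in> Lam3 lam"
  unfolding Lam3_def using Lam_uminus by auto

lemma Lam3_norm_ge1:
  assumes "lam \<ge> 1" "k \<in> Lam3 lam" "k \<noteq> 0" shows "norm k \<ge> 1"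
proof -
  obtain i where "k $ i \<noteq> 0" using assms(3) by (metis vec_eq_iff zero_index)
  hence "\<bar>k $ i\<bar> \<ge> 1" using assms Lam_ge1 unfolding Lam3_def by auto
  thus ?thesis using component_le_norm_cart[of k i] by linarith
qed

definition W :: "real \<Rightarrow> real" where
  "W x = (if x = 0 then 1 else \<bar>x\<bar> powr (-2/3))"

lemma W_nonneg: "W x \<ge> 0" unfolding W_def by auto

lemma Lam_eq: "Lam lam = insert 0 (range (\<lambda>n. lam ^ n) \<union> range (\<lambda>n. - (lam ^ n)))"
  unfolding Lam_def by auto

lemma W_summable:
  assumes lam: "lam > 1" shows "W summable_on Lam lam"
proof -
  define r where "r = lam powr (-2/3)"
  have r0: "0 \<le> r" and r1: "r < 1" unfolding r_def using lam by (auto intro: powr_less_one)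
  have geo: "(\<lambda>n. r ^ n) summable_on UNIV"
    using r0 r1 by (subst summable_on_UNIV_nonneg_real_iff) (auto intro: summable_geometric)
  have pw: "W (lam ^ n) = r ^ n" "W (- (lam ^ n)) = r ^ n" for n
  proof -
    have "\<bar>lam ^ n\<bar> powr (-2/3) = r ^ n"
      using lam unfolding r_def by (simp add: powr_power powr_realpow[symmetric] powr_powr mult.commute)
    thus "W (lam ^ n) = r ^ n" "W (- (lam ^ n)) = r ^ n" using lam unfolding W_def by auto
  qed
  have inj1: "inj (\<lambda>n::nat. lam ^ n)"
    using lam by (intro strict_mono_imp_inj_on) (auto intro: strict_monoI power_strict_increasing)
  have inj2: "inj (\<lambda>n::nat. - (lam ^ n))"
    using inj1 by (auto simp: inj_def)
  have s1: "W summable_on range (\<lambda>n. lam ^ n)"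
    by (subst summable_on_reindex[OF inj1]) (simp add: o_def pw geo)
  have s2: "W summable_on range (\<lambda>n. - (lam ^ n))"
    by (subst summable_on_reindex[OF inj2]) (simp add: o_def pw geo)
  show ?thesis unfolding Lam_eq
    using summable_on_union[OF s1 s2] by (simp add: summable_on_insert_iff)
qed

lemma W_bound:
  assumes lam: "lam \<ge> 1" and k: "k \<in> Lam3 lam" "k \<noteq> 0"
  shows "1 / (norm k)^2 \<le> W (k$1) * W (k$2) * W (k$3)"
proof -
  define M where "M = max \<bar>k$1\<bar> (max \<bar>k$2\<bar> \<bar>k$3\<bar>)"
  have all: "\<bar>k$i\<bar> \<le> M" for i
    unfolding M_def using exhaust_3[of i] by auto
  have Mn: "M \<le> norm k" unfolding M_def using component_le_norm_cart[of k] by auto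
  obtain i where "k $ i \<noteq> 0" using k(2) by (metis vec_eq_iff zero_index)
  hence "\<bar>k $ i\<bar> \<ge> 1" using k lam Lam_ge1 unfolding Lam3_def by auto
  hence M1: "M \<ge> 1" using all[of i] by linarith
  have Wi: "W (k$i) \<ge> M powr (-2/3)" for i
  proof (cases "k$i = 0")
    case True
    have "M powr (-2/3) \<le> 1 powr (-2/3)" using M1 by (intro powr_mono2') auto
    hence "M powr (-2/3) \<le> 1" by simp
    thus ?thesis using True unfolding W_def by auto
  next
    case False
    hence "\<bar>k$i\<bar> \<ge> 1" using k lam Lam_ge1 unfolding Lam3_def by auto
    hence "M powr (-2/3) \<le> \<bar>k$i\<bar> powr (-2/3)" using all[of i] by (intro powr_mono2') auto
    thus ?thesis using False unfolding W_def by auto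
  qed
  have "M powr (-2/3) * M powr (-2/3) * M powr (-2/3) \<le> W (k$1) * W (k$2) * W (k$3)"
    using Wi by (intro mult_mono) (auto intro: mult_nonneg_nonneg W_nonneg)
  also have "M powr (-2/3) * M powr (-2/3) * M powr (-2/3) = M powr (-2)"
    by (simp add: powr_add[symmetric])
  also have "M powr (-2) = 1 / M^2" using M1 by (simp add: powr_minus powr_realpow divide_inverse)
  finally have "1 / M^2 \<le> W (k$1) * W (k$2) * W (k$3)" .
  moreover have "1 / (norm k)^2 \<le> 1 / M^2" using M1 Mn
    by (intro divide_left_mono power_mono) (auto intro!: mult_pos_pos)
  ultimately show ?thesis by linarith
qed

lemma W3_summable:
  assumes lam: "lam > 1"
  shows "(\<lambda>k::real^3. W (k$1) * W (k$2) * W (k$3)) summable_on Lam3 lam"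
proof -
  let ?L = "Lam lam"
  have sW: "W summable_on ?L" using W_summable lam .
  have s2: "(\<lambda>(b,c). W b * W c) summable_on ?L \<times> ?L"
  proof (rule summable_on_SigmaI[where g = "\<lambda>b. W b * infsum W ?L"])
    show "((\<lambda>c. case (b, c) of (b, c) \<Rightarrow> W b * W c) has_sum W b * infsum W ?L) ?L" for b
      using has_sum_cmult_right[OF has_sum_infsum[OF sW], of "W b"] by simp
    show "(\<lambda>b. W b * infsum W ?L) summable_on ?L"
      using summable_on_cmult_left[OF sW] by simp
  qed (auto intro: W_nonneg mult_nonneg_nonneg)
  have s3: "(\<lambda>(a,bc). W a * (case bc of (b,c) \<Rightarrow> W b * W c)) summable_on ?L \<times> (?L \<times> ?L)"
  proof (rule summable_on_SigmaI[where g = "\<lambda>a. W a * infsum (\<lambda>(b,c). W b * W c) (?L \<times> ?L)"])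
    show "((\<lambda>y. case (a, y) of (a, bc) \<Rightarrow> W a * (case bc of (b, c) \<Rightarrow> W b * W c)) has_sum
      W a * infsum (\<lambda>(b,c). W b * W c) (?L \<times> ?L)) (?L \<times> ?L)" for a
      using has_sum_cmult_right[OF has_sum_infsum[OF s2], of "W a"] by simp
    show "(\<lambda>a. W a * infsum (\<lambda>(b,c). W b * W c) (?L \<times> ?L)) summable_on ?L"
      using summable_on_cmult_left[OF sW] by simp
  qed (auto intro: W_nonneg mult_nonneg_nonneg)
  define v where "v = (\<lambda>(a,bc). case bc of (b,c) \<Rightarrow> (vector [a,b,c] :: real^3))"
  have inj: "inj_on v (?L \<times> (?L \<times> ?L))"
    unfolding v_def by (auto simp: inj_on_def vec_eq_iff forall_3)
  have img: "v ` (?L \<times> (?L \<times> ?L)) = Lam3 lam"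
  proof
    show "v ` (?L \<times> (?L \<times> ?L)) \<subseteq> Lam3 lam"
      unfolding v_def Lam3_def by (auto simp: forall_3)
    show "Lam3 lam \<subseteq> v ` (?L \<times> (?L \<times> ?L))"
    proof
      fix k assume "k \<in> Lam3 lam"
      hence "(k$1, (k$2, k$3)) \<in> ?L \<times> (?L \<times> ?L)" unfolding Lam3_def by auto
      moreover have "v (k$1, (k$2, k$3)) = k" unfolding v_def by (simp add: vec_eq_iff forall_3)
      ultimately show "k \<in> v ` (?L \<times> (?L \<times> ?L))" by force
    qed
  qed
  have "(\<lambda>k::real^3. W (k$1) * W (k$2) * W (k$3)) summable_on v ` (?L \<times> (?L \<times> ?L))"
    by (subst summable_on_reindex[OF inj])
       (rule summable_on_cong[THEN iffD1, OF _ s3], auto simp: v_def mult.assoc)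
  thus ?thesis using img by simp
qed

lemma invsq_summable:
  assumes lam: "lam > 1"
  shows "(\<lambda>k::real^3. 1 / (norm k)^2) summable_on (Lam3 lam - {0})"
proof (rule summable_on_comparison_test)
  show "(\<lambda>k::real^3. W (k$1) * W (k$2) * W (k$3)) summable_on (Lam3 lam - {0})"
    using W3_summable[OF lam] by (rule summable_on_subset) auto
qed (use W_bound[of lam] lam in \<open>auto intro: mult_nonneg_nonneg W_nonneg\<close>)

lemma summable_on_cdivide: "f summable_on A \<Longrightarrow> (\<lambda>x. f x / (c::real)) summable_on A"
  by (simp add: divide_inverse summable_on_cmult_left)

lemma lin2: "f summable_on A \<Longrightarrow> g summable_on A \<Longrightarrow> (\<lambda>x. (c::real) * f x + d * g x) summable_on A"
  by (rule summable_on_add; rule summable_on_cmult_right)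

lemma summable_on_Diff1:
  fixes f :: "'a \<Rightarrow> real"
  assumes "f summable_on (A - {x})" shows "f summable_on A"
proof -
  have "f summable_on insert x (A - {x})" using summable_on_insert_iff[of f x "A - {x}"] assms by blast
  moreover have "A \<subseteq> insert x (A - {x})" by auto
  ultimately show ?thesis by (rule summable_on_subset)
qed

lemma sq_le_2: fixes x y :: real shows "(x + y)^2 \<le> 2 * x^2 + 2 * y^2"
proof -
  have "0 \<le> (x - y)^2" by simp
  thus ?thesis by (simp add: power2_eq_square algebra_simps)
qed

lemma amgm: fixes x y :: real shows "x * y \<le> (x^2 + y^2) / 2"
proof -
  have "0 \<le> (x - y)^2" by simp
  thus ?thesis by (simp add: power2_eq_square algebra_simps)
qed

lemma sq_norm_add_le: "(norm (x + y))^2 \<le> 2 * (norm x)^2 + 2 * (norm y)^2"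
proof -
  have "(norm (x + y))^2 \<le> (norm x + norm y)^2"
    by (intro power_mono norm_triangle_ineq) auto
  thus ?thesis using sq_le_2[of "norm x" "norm y"] by linarith
qed

lemma sq_norm_diff_le: "(norm (x - y))^2 \<le> 2 * (norm x)^2 + 2 * (norm y)^2"
  using sq_norm_add_le[of x "- y"] by simp

lemma hm_summand_nonneg: "hm_summand m a k \<ge> 0"
  unfolding hm_summand_def by simp

lemma hm_finite_add:
  assumes "hm_finite lam m a" "hm_finite lam m b"
  shows "hm_finite lam m (\<lambda>k. a k + b k)"
  unfolding hm_finite_def
proof (rule summable_on_comparison_test)
  show "(\<lambda>k. 2 * hm_summand m a k + 2 * hm_summand m b k) summable_on (Lam3 lam - {0})"
    using assms unfolding hm_finite_def by (rule lin2)
  fix k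
  have "norm k ^ (2*m) * (norm (a k + b k))^2 \<le> norm k ^ (2*m) * (2 * (norm (a k))^2 + 2 * (norm (b k))^2)"
    by (intro mult_left_mono sq_norm_add_le) auto
  thus "hm_summand m (\<lambda>k. a k + b k) k \<le> 2 * hm_summand m a k + 2 * hm_summand m b k"
    unfolding hm_summand_def by (simp add: algebra_simps)
qed (rule hm_summand_nonneg)

lemma hm_finite_scale:
  assumes "hm_finite lam m a"
  shows "hm_finite lam m (\<lambda>k. c *\<^sub>R a k)"
proof -
  have "hm_summand m (\<lambda>k. c *\<^sub>R a k) = (\<lambda>k. c^2 * hm_summand m a k)"
    unfolding hm_summand_def by (auto simp: power_mult_distrib)
  thus ?thesis using assms unfolding hm_finite_def by (simp add: summable_on_cmult_right)
qed

lemma hm_finite_diff: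
  assumes "hm_finite lam m a" "hm_finite lam m b"
  shows "hm_finite lam m (\<lambda>k. a k - b k)"
  using hm_finite_add[OF assms(1) hm_finite_scale[OF assms(2), of "-1"]] by simp

lemma hm_l2:
  assumes lam: "lam \<ge> 1" and hm: "hm_finite lam m a" and a0: "a 0 = 0"
  shows "(\<lambda>k. (norm (a k))^2) summable_on Lam3 lam"
    and "infsum (\<lambda>k. (norm (a k))^2) (Lam3 lam) \<le> (hm_norm lam m a)^2"
proof -
  have le: "(norm (a k))^2 \<le> hm_summand m a k" if "k \<in> Lam3 lam - {0}" for k
  proof -
    have "norm k \<ge> 1" using that Lam3_norm_ge1 lam by auto
    hence "1 \<le> norm k ^ (2*m)" by (simp add: one_le_power)
    thus ?thesis unfolding hm_summand_def by (simp add: mult_le_cancel_right1)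
  qed
  have s: "(\<lambda>k. (norm (a k))^2) summable_on (Lam3 lam - {0})"
    using hm le unfolding hm_finite_def by (rule summable_on_comparison_test[where f = "hm_summand m a"]) auto
  show "(\<lambda>k. (norm (a k))^2) summable_on Lam3 lam"
    using s by (rule summable_on_Diff1)
  hence "infsum (\<lambda>k. (norm (a k))^2) (Lam3 lam) \<le> infsum (hm_summand m a) (Lam3 lam - {0})"
    using hm le a0 unfolding hm_finite_def by (intro infsum_mono_neutral) auto
  also have "\<dots> = (hm_norm lam m a)^2"
    unfolding hm_norm_def by (simp add: infsum_nonneg hm_summand_nonneg)
  finally show "infsum (\<lambda>k. (norm (a k))^2) (Lam3 lam) \<le> (hm_norm lam m a)^2" .
qed

lemma hm_h1:
  assumes lam: "lam \<ge> 1" and m: "m \<ge> 1" and hm: "hm_finite lam m a" and a0: "a 0 = 0"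
  shows "(\<lambda>k. (norm k * norm (a k))^2) summable_on Lam3 lam"
proof -
  have le: "(norm k * norm (a k))^2 \<le> hm_summand m a k" if "k \<in> Lam3 lam - {0}" for k
  proof -
    have "norm k \<ge> 1" using that Lam3_norm_ge1 lam by auto
    hence "norm k ^ 2 \<le> norm k ^ (2*m)" using m by (intro power_increasing) auto
    thus ?thesis unfolding hm_summand_def by (simp add: power_mult_distrib mult_right_mono)
  qed
  have s: "(\<lambda>k. (norm k * norm (a k))^2) summable_on (Lam3 lam - {0})"
    using hm le unfolding hm_finite_def by (rule summable_on_comparison_test[where f = "hm_summand m a"]) auto
  show ?thesis using s by (rule summable_on_Diff1)
qed

lemma hm_l1:
  assumes lam: "lam > 1" and m: "m \<ge> 1" and hm: "hm_finite lam m a" and a0: "a 0 = 0"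
  shows "(\<lambda>k. norm (a k)) summable_on Lam3 lam"
proof -
  have h1: "(\<lambda>k. (norm k * norm (a k))^2) summable_on Lam3 lam"
    using hm_h1[OF _ m hm a0] lam by simp
  have le: "norm (a k) \<le> ((1 / (norm k)^2) + (norm k * norm (a k))^2) / 2" if "k \<in> Lam3 lam - {0}" for k
  proof -
    have nk: "norm k \<noteq> 0" using that by auto
    have "norm (a k) = (1 / norm k) * (norm k * norm (a k))" using nk by simp
    also have "\<dots> \<le> ((1 / norm k)^2 + (norm k * norm (a k))^2) / 2" by (rule amgm)
    finally show ?thesis by (simp add: power_divide)
  qed
  have s: "(\<lambda>k. norm (a k)) summable_on (Lam3 lam - {0})"
  proof (rule summable_on_comparison_test[OF _ le])
    have h1': "(\<lambda>k. (norm k * norm (a k))^2) summable_on (Lam3 lam - {0})"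
      by (rule summable_on_subset[OF h1]) blast
    show "(\<lambda>k. ((1 / (norm k)^2) + (norm k * norm (a k))^2) / 2) summable_on (Lam3 lam - {0})"
      by (rule summable_on_cdivide[OF summable_on_add[OF invsq_summable[OF lam] h1']])
  qed simp_all
  show ?thesis using s by (rule summable_on_Diff1)
qed

definition ipf :: "(real^3 \<Rightarrow> complex^3) \<Rightarrow> (real^3 \<Rightarrow> complex^3) \<Rightarrow> real^3 \<Rightarrow> complex" where
  "ipf a b k = (\<Sum>i\<in>UNIV. a k $ i * cnj (b k $ i))"

lemma inner_field_ipf: "inner_field lam a b = infsum (ipf a b) (Lam3 lam)"
  unfolding inner_field_def ipf_def by simp

lemma norm_ipf: "norm (ipf a b k) \<le> 3 * (norm (a k) * norm (b k))"
proof -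
  have "norm (ipf a b k) \<le> (\<Sum>i\<in>(UNIV::3 set). norm (a k $ i * cnj (b k $ i)))"
    unfolding ipf_def by (rule norm_sum)
  also have "\<dots> \<le> (\<Sum>i\<in>(UNIV::3 set). norm (a k) * norm (b k))"
  proof (rule sum_mono)
    fix i
    have "norm (a k $ i * cnj (b k $ i)) = norm (a k $ i) * norm (b k $ i)" by (simp add: norm_mult)
    also have "\<dots> \<le> norm (a k) * norm (b k)"
      by (rule mult_mono[OF Finite_Cartesian_Product.norm_nth_le Finite_Cartesian_Product.norm_nth_le]) simp_all
    finally show "norm (a k $ i * cnj (b k $ i)) \<le> norm (a k) * norm (b k)" .
  qed
  finally show ?thesis by simp
qed

definition N2 :: "real \<Rightarrow> (real^3 \<Rightarrow> complex^3) \<Rightarrow> real" where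
  "N2 lam a = infsum (\<lambda>k. (norm (a k))^2) (Lam3 lam)"

definition l2 :: "real \<Rightarrow> (real^3 \<Rightarrow> complex^3) \<Rightarrow> bool" where
  "l2 lam a \<longleftrightarrow> (\<lambda>k. (norm (a k))^2) summable_on Lam3 lam"

lemma N2_nonneg: "N2 lam a \<ge> 0"
  unfolding N2_def by (simp add: infsum_nonneg)

lemma ipf_summable:
  assumes "l2 lam a" "l2 lam b"
  shows "ipf a b summable_on Lam3 lam"
proof -
  have "(\<lambda>k. 3 * (((norm (a k))^2 + (norm (b k))^2) / 2)) summable_on Lam3 lam"
    by (rule summable_on_cmult_right[OF summable_on_cdivide[OF summable_on_add[OF assms(1)[unfolded l2_def] assms(2)[unfolded l2_def]]]])
  hence "(\<lambda>k. norm (ipf a b k)) summable_on Lam3 lam"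
  proof (rule summable_on_comparison_test)
    fix k
    show "0 \<le> norm (ipf a b k)" by simp
    show "norm (ipf a b k) \<le> 3 * (((norm (a k))^2 + (norm (b k))^2) / 2)"
      using norm_ipf[of a b k] amgm[of "norm (a k)" "norm (b k)"] by linarith
  qed
  thus ?thesis by (rule abs_summable_summable)
qed

lemma CS_infsum:
  fixes f g :: "'a \<Rightarrow> real"
  assumes f0: "\<And>x. f x \<ge> 0" and g0: "\<And>x. g x \<ge> 0"
    and sf: "(\<lambda>x. (f x)^2) summable_on A" and sg: "(\<lambda>x. (g x)^2) summable_on A"
  shows "(\<lambda>x. f x * g x) summable_on A"
    and "infsum (\<lambda>x. f x * g x) A \<le> sqrt (infsum (\<lambda>x. (f x)^2) A) * sqrt (infsum (\<lambda>x. (g x)^2) A)"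
proof -
  show sfg: "(\<lambda>x. f x * g x) summable_on A"
  proof (rule summable_on_comparison_test)
    show "(\<lambda>x. ((f x)^2 + (g x)^2) / 2) summable_on A"
      using sf sg by (rule summable_on_cdivide[OF summable_on_add])
  qed (rule amgm, simp add: f0 g0)
  show "infsum (\<lambda>x. f x * g x) A \<le> sqrt (infsum (\<lambda>x. (f x)^2) A) * sqrt (infsum (\<lambda>x. (g x)^2) A)"
  proof (rule infsum_le_finite_sums[OF sfg])
    fix F assume F: "finite F" "F \<subseteq> A"
    have "(\<Sum>x\<in>F. f x * g x) = (\<Sum>x\<in>F. \<bar>f x\<bar> * \<bar>g x\<bar>)" using f0 g0 by simp
    also have "\<dots> \<le> L2_set f F * L2_set g F" by (rule L2_set_mult_ineq)
    also have "\<dots> \<le> sqrt (infsum (\<lambda>x. (f x)^2) A) * sqrt (infsum (\<lambda>x. (g x)^2) A)"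
      unfolding L2_set_def
      by (intro mult_mono real_sqrt_le_mono finite_sum_le_infsum sf sg F) (auto intro: sum_nonneg infsum_nonneg)
    finally show "(\<Sum>x\<in>F. f x * g x) \<le> sqrt (infsum (\<lambda>x. (f x)^2) A) * sqrt (infsum (\<lambda>x. (g x)^2) A)" .
  qed
qed

lemma ip_bound:
  assumes "l2 lam a" "l2 lam b"
  shows "norm (inner_field lam a b) \<le> 3 * (sqrt (N2 lam a) * sqrt (N2 lam b))"
proof -
  have sn: "(\<lambda>k. norm (ipf a b k)) summable_on Lam3 lam"
    using ipf_summable[OF assms] summable_on_iff_abs_summable_on_complex by blast
  have cs: "(\<lambda>k. norm (a k) * norm (b k)) summable_on Lam3 lam"
     "infsum (\<lambda>k. norm (a k) * norm (b k)) (Lam3 lam) \<le> sqrt (N2 lam a) * sqrt (N2 lam b)"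
    using CS_infsum[of "\<lambda>k. norm (a k)" "\<lambda>k. norm (b k)"] assms unfolding l2_def N2_def by auto
  have "norm (inner_field lam a b) \<le> infsum (\<lambda>k. norm (ipf a b k)) (Lam3 lam)"
    unfolding inner_field_ipf using sn by (rule norm_infsum_bound)
  also have "\<dots> \<le> infsum (\<lambda>k. 3 * (norm (a k) * norm (b k))) (Lam3 lam)"
    using sn cs(1) by (intro infsum_mono summable_on_cmult_right norm_ipf) auto
  also have "\<dots> = 3 * infsum (\<lambda>k. norm (a k) * norm (b k)) (Lam3 lam)"
    by (rule infsum_cmult_right')
  also have "\<dots> \<le> 3 * (sqrt (N2 lam a) * sqrt (N2 lam b))" using cs(2) by simp
  finally show ?thesis .
qed

lemma l2_add: "l2 lam a \<Longrightarrow> l2 lam b \<Longrightarrow> l2 lam (\<lambda>k. a k + b k)"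
  unfolding l2_def
proof (rule summable_on_comparison_test[of "\<lambda>k. 2 * (norm (a k))^2 + 2 * (norm (b k))^2"])
  assume a: "(\<lambda>k. (norm (a k))^2) summable_on Lam3 lam" and b: "(\<lambda>k. (norm (b k))^2) summable_on Lam3 lam"
  show "(\<lambda>k. 2 * (norm (a k))^2 + 2 * (norm (b k))^2) summable_on Lam3 lam"
    by (rule summable_on_add; rule summable_on_cmult_right) (fact a, fact b)
qed (rule sq_norm_add_le, simp)

lemma l2_scale: "l2 lam a \<Longrightarrow> l2 lam (\<lambda>k. c *\<^sub>R a k)"
  unfolding l2_def by (simp add: power_mult_distrib summable_on_cmult_right)

lemma l2_diff: "l2 lam a \<Longrightarrow> l2 lam b \<Longrightarrow> l2 lam (\<lambda>k. a k - b k)"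
proof -
  assume a: "l2 lam a" and b: "l2 lam b"
  have "l2 lam (\<lambda>k. a k + (-1) *\<^sub>R b k)" by (rule l2_add[OF a l2_scale[OF b]])
  thus ?thesis by simp
qed

lemma N2_add_le:
  assumes a: "l2 lam a" and b: "l2 lam b"
  shows "N2 lam (\<lambda>k. a k + b k) \<le> 2 * N2 lam a + 2 * N2 lam b"
proof -
  have sa: "(\<lambda>k. 2 * (norm (a k))^2) summable_on Lam3 lam"
    using a unfolding l2_def by (rule summable_on_cmult_right)
  have sb: "(\<lambda>k. 2 * (norm (b k))^2) summable_on Lam3 lam"
    using b unfolding l2_def by (rule summable_on_cmult_right)
  have sab: "(\<lambda>k. (norm (a k + b k))^2) summable_on Lam3 lam"
    using l2_add[OF a b] unfolding l2_def .
  have "N2 lam (\<lambda>k. a k + b k) \<le> infsum (\<lambda>k. 2 * (norm (a k))^2 + 2 * (norm (b k))^2) (Lam3 lam)"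
    unfolding N2_def by (rule infsum_mono[OF sab summable_on_add[OF sa sb]]) (rule sq_norm_add_le)
  also have "\<dots> = infsum (\<lambda>k. 2 * (norm (a k))^2) (Lam3 lam) + infsum (\<lambda>k. 2 * (norm (b k))^2) (Lam3 lam)"
    by (rule infsum_add[OF sa sb])
  also have "\<dots> = 2 * N2 lam a + 2 * N2 lam b"
    unfolding N2_def by (simp add: infsum_cmult_right')
  finally show ?thesis .
qed

lemma N2_scale: "N2 lam (\<lambda>k. c *\<^sub>R a k) = c^2 * N2 lam a"
  unfolding N2_def by (simp add: power_mult_distrib infsum_cmult_right')

lemma ipf_add_left: "ipf (\<lambda>k. a k + b k) c = (\<lambda>k. ipf a c k + ipf b c k)"
  unfolding ipf_def by (auto simp: sum.distrib algebra_simps)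
lemma ipf_add_right: "ipf a (\<lambda>k. b k + c k) = (\<lambda>k. ipf a b k + ipf a c k)"
  unfolding ipf_def by (auto simp: sum.distrib algebra_simps)
lemma ipf_scale_left: "ipf (\<lambda>k. r *\<^sub>R a k) c = (\<lambda>k. of_real r * ipf a c k)"
  unfolding ipf_def by (simp only: vector_scaleR_component) (simp add: sum_distrib_left scaleR_conv_of_real algebra_simps)
lemma ipf_scale_right: "ipf a (\<lambda>k. r *\<^sub>R c k) = (\<lambda>k. of_real r * ipf a c k)"
  unfolding ipf_def by (simp only: vector_scaleR_component) (simp add: sum_distrib_left scaleR_conv_of_real algebra_simps)

lemma ip_add_left: "l2 lam a \<Longrightarrow> l2 lam b \<Longrightarrow> l2 lam c \<Longrightarrow>
  inner_field lam (\<lambda>k. a k + b k) c = inner_field lam a c + inner_field lam b c"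
  unfolding inner_field_ipf ipf_add_left by (rule infsum_add; rule ipf_summable; assumption)
lemma ip_add_right: "l2 lam a \<Longrightarrow> l2 lam b \<Longrightarrow> l2 lam c \<Longrightarrow>
  inner_field lam a (\<lambda>k. b k + c k) = inner_field lam a b + inner_field lam a c"
  unfolding inner_field_ipf ipf_add_right by (rule infsum_add; rule ipf_summable; assumption)
lemma ip_scale_left: "inner_field lam (\<lambda>k. r *\<^sub>R a k) c = of_real r * inner_field lam a c"
  unfolding inner_field_ipf ipf_scale_left by (rule infsum_cmult_right')
lemma ip_scale_right: "inner_field lam a (\<lambda>k. r *\<^sub>R c k) = of_real r * inner_field lam a c"
  unfolding inner_field_ipf ipf_scale_right by (rule infsum_cmult_right')

lemma infsum_sum1:
  fixes f :: "'i \<Rightarrow> 'a \<Rightarrow> complex"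
  assumes "finite I" "\<And>i. i \<in> I \<Longrightarrow> f i summable_on A"
  shows "(\<lambda>x. \<Sum>i\<in>I. f i x) summable_on A \<and> infsum (\<lambda>x. \<Sum>i\<in>I. f i x) A = (\<Sum>i\<in>I. infsum (f i) A)"
  using assms
proof (induction I rule: finite_induct)
  case empty
  then show ?case by simp
next
  case (insert i I)
  have si: "f i summable_on A" using insert by simp
  have IH: "(\<lambda>x. \<Sum>i\<in>I. f i x) summable_on A" "infsum (\<lambda>x. \<Sum>i\<in>I. f i x) A = (\<Sum>i\<in>I. infsum (f i) A)"
    using insert by auto
  have eq: "(\<lambda>x. \<Sum>i\<in>insert i I. f i x) = (\<lambda>x. f i x + (\<Sum>i\<in>I. f i x))"
    using insert by simp
  show ?case unfolding eq
    using summable_on_add[OF si IH(1)] infsum_add[OF si IH(1)] IH(2) insert by simp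
qed

lemma infsum_sum2:
  fixes f :: "'i \<Rightarrow> 'j \<Rightarrow> 'a \<Rightarrow> complex"
  assumes "finite I" "finite J" "\<And>i j. f i j summable_on A"
  shows "(\<lambda>x. \<Sum>i\<in>I. \<Sum>j\<in>J. f i j x) summable_on A"
    and "infsum (\<lambda>x. \<Sum>i\<in>I. \<Sum>j\<in>J. f i j x) A = (\<Sum>i\<in>I. \<Sum>j\<in>J. infsum (f i j) A)"
proof -
  have inner: "(\<lambda>x. \<Sum>j\<in>J. f i j x) summable_on A \<and> infsum (\<lambda>x. \<Sum>j\<in>J. f i j x) A = (\<Sum>j\<in>J. infsum (f i j) A)" for i
    using infsum_sum1[of J "f i" A] assms by auto
  have outer: "(\<lambda>x. \<Sum>i\<in>I. \<Sum>j\<in>J. f i j x) summable_on A \<and> infsum (\<lambda>x. \<Sum>i\<in>I. \<Sum>j\<in>J. f i j x) A = (\<Sum>i\<in>I. infsum (\<lambda>x. \<Sum>j\<in>J. f i j x) A)"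
    using infsum_sum1[of I "\<lambda>i x. \<Sum>j\<in>J. f i j x" A] assms inner by auto
  show "(\<lambda>x. \<Sum>i\<in>I. \<Sum>j\<in>J. f i j x) summable_on A" using outer by simp
  show "infsum (\<lambda>x. \<Sum>i\<in>I. \<Sum>j\<in>J. f i j x) A = (\<Sum>i\<in>I. \<Sum>j\<in>J. infsum (f i j) A)"
    using outer inner by simp
qed

lemma infsum_cdiv: "infsum (\<lambda>x. f x / (c::real)) A = infsum f A / c"
  by (simp only: divide_inverse infsum_cmult_left')

definition Pk :: "real \<Rightarrow> real^3 \<Rightarrow> (real^3) set" where
  "Pk lam k = {p \<in> Lam3 lam. k - p \<in> Lam3 lam}"

definition PP :: "real \<Rightarrow> ((real^3) \<times> (real^3)) set" where
  "PP lam = Sigma (Lam3 lam) (Pk lam)"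

lemma PP_iff: "(k, p) \<in> PP lam \<longleftrightarrow> k \<in> Lam3 lam \<and> p \<in> Lam3 lam \<and> k - p \<in> Lam3 lam"
  unfolding PP_def Pk_def by auto

lemma pair_summable:
  fixes a b c :: "real^3 \<Rightarrow> real"
  assumes a0: "\<And>x. a x \<ge> 0" and b0: "\<And>x. b x \<ge> 0" and c0: "\<And>x. c x \<ge> 0"
    and sa: "a summable_on Lam3 lam"
    and sb: "(\<lambda>k. (b k)^2) summable_on Lam3 lam"
    and sc: "(\<lambda>k. (c k)^2) summable_on Lam3 lam"
  shows "(\<lambda>(k,p). a p * b (k - p) * c k) summable_on PP lam"
proof -
  let ?L = "Lam3 lam"
  define K where "K p = {k \<in> ?L. k - p \<in> ?L}" for p
  define M where "M = (infsum (\<lambda>k. (b k)^2) ?L + infsum (\<lambda>k. (c k)^2) ?L) / 2"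
  have inner: "(\<lambda>k. b (k - p) * c k) summable_on K p \<and> infsum (\<lambda>k. b (k - p) * c k) (K p) \<le> M" for p
  proof -
    have inj: "inj_on (\<lambda>k. k - p) (K p)" by (auto simp: inj_on_def)
    have img: "(\<lambda>k. k - p) ` K p \<subseteq> ?L" unfolding K_def by auto
    have sbi: "(\<lambda>q. (b q)^2) summable_on (\<lambda>k. k - p) ` K p"
      using summable_on_subset[OF sb img] .
    have sb': "(\<lambda>k. (b (k - p))^2) summable_on K p"
      using sbi unfolding summable_on_reindex[OF inj] by (simp add: o_def)
    have sc': "(\<lambda>k. (c k)^2) summable_on K p"
      by (rule summable_on_subset[OF sc]) (auto simp: K_def)
    have s2: "(\<lambda>k. ((b (k - p))^2 + (c k)^2) / 2) summable_on K p"
      by (rule summable_on_cdivide[OF summable_on_add[OF sb' sc']])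
    have s: "(\<lambda>k. b (k - p) * c k) summable_on K p"
      by (rule summable_on_comparison_test[OF s2]) (rule amgm, simp add: b0 c0)
    have "infsum (\<lambda>k. b (k - p) * c k) (K p) \<le> infsum (\<lambda>k. ((b (k - p))^2 + (c k)^2) / 2) (K p)"
      by (rule infsum_mono[OF s s2]) (rule amgm)
    also have "\<dots> = (infsum (\<lambda>k. (b (k - p))^2) (K p) + infsum (\<lambda>k. (c k)^2) (K p)) / 2"
      unfolding infsum_cdiv infsum_add[OF sb' sc'] ..
    also have "infsum (\<lambda>k. (b (k - p))^2) (K p) = infsum (\<lambda>q. (b q)^2) ((\<lambda>k. k - p) ` K p)"
      by (simp add: infsum_reindex[OF inj] o_def)
    also have "\<dots> \<le> infsum (\<lambda>k. (b k)^2) ?L"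
      using img by (intro infsum_mono_neutral[OF sbi sb]) auto
    also have "infsum (\<lambda>k. (c k)^2) (K p) \<le> infsum (\<lambda>k. (c k)^2) ?L"
      by (intro infsum_mono_neutral[OF sc' sc]) (auto simp: K_def)
    finally have "infsum (\<lambda>k. b (k - p) * c k) (K p) \<le> M"
      unfolding M_def by (simp add: divide_right_mono)
    with s show ?thesis by simp
  qed
  define g where "g p = a p * infsum (\<lambda>k. b (k - p) * c k) (K p)" for p
  have sQ: "(\<lambda>(p,k). a p * (b (k - p) * c k)) summable_on Sigma ?L K"
  proof (rule summable_on_SigmaI[where g = g])
    fix p assume "p \<in> ?L"
    show "((\<lambda>k. case (p, k) of (p, k) \<Rightarrow> a p * (b (k - p) * c k)) has_sum g p) (K p)"
      unfolding g_def using has_sum_cmult_right[OF has_sum_infsum[OF conjunct1[OF inner]], of "a p"]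
      by simp
  next
    show "g summable_on ?L"
    proof (rule summable_on_comparison_test[where f = "\<lambda>p. a p * M"])
      show "(\<lambda>p. a p * M) summable_on ?L" by (rule summable_on_cmult_left[OF sa])
      fix p
      show "g p \<le> a p * M" unfolding g_def using inner[of p] a0[of p] by (simp add: mult_left_mono)
      have "0 \<le> infsum (\<lambda>k. b (k - p) * c k) (K p)" by (rule infsum_nonneg) (simp add: b0 c0)
      thus "0 \<le> g p" unfolding g_def using a0[of p] by simp
    qed
  next
    fix p k show "0 \<le> (case (p, k) of (p, k) \<Rightarrow> a p * (b (k - p) * c k))"
      using a0 b0 c0 by simp
  qed
  have inj: "inj_on (\<lambda>(p,k). (k,p)) (Sigma ?L K)" by (auto simp: inj_on_def)
  have img: "(\<lambda>(p,k). (k,p)) ` (Sigma ?L K) = PP lam"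
    unfolding PP_def Pk_def K_def by force
  have "(\<lambda>(k,p). a p * b (k - p) * c k) summable_on (\<lambda>(p,k). (k,p)) ` (Sigma ?L K)"
    unfolding summable_on_reindex[OF inj]
    by (rule summable_on_cong[THEN iffD1, OF _ sQ]) (auto simp: mult.assoc)
  thus ?thesis unfolding img .
qed

lemma pair_summable_C:
  fixes a b c :: "real^3 \<Rightarrow> real" and F :: "(real^3) \<times> (real^3) \<Rightarrow> complex"
  assumes a0: "\<And>x. a x \<ge> 0" and b0: "\<And>x. b x \<ge> 0" and c0: "\<And>x. c x \<ge> 0"
    and sa: "a summable_on Lam3 lam"
    and sb: "(\<lambda>k. (b k)^2) summable_on Lam3 lam"
    and sc: "(\<lambda>k. (c k)^2) summable_on Lam3 lam"
    and bound: "\<And>k p. norm (F (k, p)) \<le> C * (a p * b (k - p) * c k)"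
  shows "F summable_on PP lam"
proof -
  have "(\<lambda>x. C * (case x of (k,p) \<Rightarrow> a p * b (k - p) * c k)) summable_on PP lam"
    by (rule summable_on_cmult_right[OF pair_summable[OF a0 b0 c0 sa sb sc]])
  hence "(\<lambda>x. norm (F x)) summable_on PP lam"
    by (rule summable_on_comparison_test) (auto simp: bound split: prod.splits)
  thus ?thesis by (rule abs_summable_summable)
qed

definition Cv :: "(real^3 \<Rightarrow> complex^3) \<Rightarrow> (real^3 \<Rightarrow> complex^3) \<Rightarrow> real^3 \<Rightarrow> real^3 \<Rightarrow> 3 \<Rightarrow> 3 \<Rightarrow> complex" where
  "Cv a b k p i j = a p $ j * (\<i> * complex_of_real ((k - p) $ j) * b (k - p) $ i)"

lemma adv_Cv: "adv lam a b k $ i = (\<Sum>j\<in>UNIV. infsum (\<lambda>p. Cv a b k p i j) (Pk lam k))"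
  unfolding adv_def conv_def Cv_def Pk_def by simp

lemma norm_Cv: "norm (Cv a b k p i j) \<le> norm (a p) * (norm (k - p) * norm (b (k - p)))"
proof -
  have "norm (Cv a b k p i j) = norm (a p $ j) * (\<bar>(k - p) $ j\<bar> * norm (b (k - p) $ i))"
    unfolding Cv_def norm_mult norm_of_real by simp
  also have "\<dots> \<le> norm (a p) * (norm (k - p) * norm (b (k - p)))"
    by (intro mult_mono Finite_Cartesian_Product.norm_nth_le component_le_norm_cart) auto
  finally show ?thesis .
qed

definition good :: "real \<Rightarrow> (real^3 \<Rightarrow> complex^3) \<Rightarrow> bool" where
  "good lam a \<longleftrightarrow> reality_vec lam a \<and> (\<forall>k\<in>Lam3 lam. divergence a k = 0)
     \<and> (\<lambda>k. norm (a k)) summable_on Lam3 lam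
     \<and> (\<lambda>k. (norm k * norm (a k))^2) summable_on Lam3 lam
     \<and> (\<lambda>k. (norm (a k))^2) summable_on Lam3 lam"

definition T1 where "T1 u h i j = (\<lambda>(k,p). Cv u u k p i j * cnj (h k $ i))"
definition T2 where "T2 u h i j = (\<lambda>(k,p). u k $ i * cnj (Cv u h k p i j))"
definition T3 where "T3 u h i j = (\<lambda>(k,p). u k $ i * cnj (Cv h u k p i j))"

definition S1 where "S1 u h x = (\<Sum>i\<in>UNIV. \<Sum>j\<in>UNIV. T1 u h i j x)"
definition S2 where "S2 u h x = (\<Sum>i\<in>UNIV. \<Sum>j\<in>UNIV. T2 u h i j x)"
definition S3 where "S3 u h x = (\<Sum>i\<in>UNIV. \<Sum>j\<in>UNIV. T3 u h i j x)"

lemma T1_summable: assumes "good lam u" "good lam h"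
  shows "T1 u h i j summable_on PP lam"
proof (rule pair_summable_C[where a = "\<lambda>p. norm (u p)" and b = "\<lambda>q. norm q * norm (u q)" and c = "\<lambda>k. norm (h k)" and C = 1])
  fix k p
  show "norm (T1 u h i j (k, p)) \<le> 1 * (norm (u p) * (norm (k - p) * norm (u (k - p))) * norm (h k))"
    unfolding T1_def using norm_Cv[of u u k p i j] Finite_Cartesian_Product.norm_nth_le[of "h k" i]
    by (simp add: norm_mult mult_mono)
qed (use assms in \<open>auto simp: good_def\<close>)

lemma T2_summable: assumes "good lam u" "good lam h"
  shows "T2 u h i j summable_on PP lam"
proof (rule pair_summable_C[where a = "\<lambda>p. norm (u p)" and b = "\<lambda>q. norm q * norm (h q)" and c = "\<lambda>k. norm (u k)" and C = 1])
  fix k p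
  have "norm (T2 u h i j (k, p)) = norm (u k $ i) * norm (Cv u h k p i j)"
    unfolding T2_def by (simp add: norm_mult)
  also have "\<dots> \<le> norm (u k) * (norm (u p) * (norm (k - p) * norm (h (k - p))))"
    using norm_Cv[of u h k p i j] Finite_Cartesian_Product.norm_nth_le[of "u k" i]
    by (intro mult_mono) auto
  finally show "norm (T2 u h i j (k, p)) \<le> 1 * (norm (u p) * (norm (k - p) * norm (h (k - p))) * norm (u k))"
    by (simp add: algebra_simps)
qed (use assms in \<open>auto simp: good_def\<close>)

lemma T3_summable: assumes "good lam u" "good lam h"
  shows "T3 u h i j summable_on PP lam"
proof (rule pair_summable_C[where a = "\<lambda>p. norm (h p)" and b = "\<lambda>q. norm q * norm (u q)" and c = "\<lambda>k. norm (u k)" and C = 1])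
  fix k p
  have "norm (T3 u h i j (k, p)) = norm (u k $ i) * norm (Cv h u k p i j)"
    unfolding T3_def by (simp add: norm_mult)
  also have "\<dots> \<le> norm (u k) * (norm (h p) * (norm (k - p) * norm (u (k - p))))"
    using norm_Cv[of h u k p i j] Finite_Cartesian_Product.norm_nth_le[of "u k" i]
    by (intro mult_mono) auto
  finally show "norm (T3 u h i j (k, p)) \<le> 1 * (norm (h p) * (norm (k - p) * norm (u (k - p))) * norm (u k))"
    by (simp add: algebra_simps)
qed (use assms in \<open>auto simp: good_def\<close>)

lemma S_summable: assumes "good lam u" "good lam h"
  shows "S1 u h summable_on PP lam" "S2 u h summable_on PP lam" "S3 u h summable_on PP lam"
proof -
  show "S1 u h summable_on PP lam" unfolding S1_def[abs_def]
    by (rule infsum_sum2(1)) (auto intro: T1_summable[OF assms])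
  show "S2 u h summable_on PP lam" unfolding S2_def[abs_def]
    by (rule infsum_sum2(1)) (auto intro: T2_summable[OF assms])
  show "S3 u h summable_on PP lam" unfolding S3_def[abs_def]
    by (rule infsum_sum2(1)) (auto intro: T3_summable[OF assms])
qed

lemma sliceD: fixes F :: "(real^3) \<times> (real^3) \<Rightarrow> complex" shows "F summable_on PP lam \<Longrightarrow> k \<in> Lam3 lam \<Longrightarrow> (\<lambda>p. F (k, p)) summable_on Pk lam k"
  unfolding PP_def using summable_on_SigmaD1[of "\<lambda>k p. F (k, p)" "Lam3 lam" "Pk lam" k]
  by (simp add: case_prod_beta')

lemma Y1: assumes "good lam u" "good lam h" "k \<in> Lam3 lam"
  shows "(\<Sum>i\<in>UNIV. adv lam u u k $ i * cnj (h k $ i)) = infsum (\<lambda>p. S1 u h (k, p)) (Pk lam k)"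
proof -
  have s: "(\<lambda>p. T1 u h i j (k, p)) summable_on Pk lam k" for i j
    by (rule sliceD[OF T1_summable[OF assms(1,2)] assms(3)])
  have "(\<Sum>i\<in>UNIV. adv lam u u k $ i * cnj (h k $ i))
      = (\<Sum>i\<in>UNIV. \<Sum>j\<in>UNIV. infsum (\<lambda>p. T1 u h i j (k, p)) (Pk lam k))"
    unfolding adv_Cv T1_def by (simp add: sum_distrib_right infsum_cmult_left')
  also have "\<dots> = infsum (\<lambda>p. S1 u h (k, p)) (Pk lam k)"
    unfolding S1_def by (rule infsum_sum2(2)[symmetric]) (auto intro: s)
  finally show ?thesis .
qed

lemma Y2: assumes "good lam u" "good lam h" "k \<in> Lam3 lam"
  shows "(\<Sum>i\<in>UNIV. u k $ i * cnj (adv lam u h k $ i)) = infsum (\<lambda>p. S2 u h (k, p)) (Pk lam k)"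
proof -
  have s: "(\<lambda>p. T2 u h i j (k, p)) summable_on Pk lam k" for i j
    by (rule sliceD[OF T2_summable[OF assms(1,2)] assms(3)])
  have "(\<Sum>i\<in>UNIV. u k $ i * cnj (adv lam u h k $ i))
      = (\<Sum>i\<in>UNIV. \<Sum>j\<in>UNIV. infsum (\<lambda>p. u k $ i * cnj (Cv u h k p i j)) (Pk lam k))"
    unfolding adv_Cv by (simp only: cnj_sum infsum_cnj[symmetric] sum_distrib_left infsum_cmult_right'[symmetric])
    also have "\<dots> = (\<Sum>i\<in>UNIV. \<Sum>j\<in>UNIV. infsum (\<lambda>p. T2 u h i j (k, p)) (Pk lam k))"
      by (simp add: T2_def)
  also have "\<dots> = infsum (\<lambda>p. S2 u h (k, p)) (Pk lam k)"
    unfolding S2_def by (rule infsum_sum2(2)[symmetric]) (auto intro: s)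
  finally show ?thesis .
qed

lemma Y3: assumes "good lam u" "good lam h" "k \<in> Lam3 lam"
  shows "(\<Sum>i\<in>UNIV. u k $ i * cnj (adv lam h u k $ i)) = infsum (\<lambda>p. S3 u h (k, p)) (Pk lam k)"
proof -
  have s: "(\<lambda>p. T3 u h i j (k, p)) summable_on Pk lam k" for i j
    by (rule sliceD[OF T3_summable[OF assms(1,2)] assms(3)])
  have "(\<Sum>i\<in>UNIV. u k $ i * cnj (adv lam h u k $ i))
      = (\<Sum>i\<in>UNIV. \<Sum>j\<in>UNIV. infsum (\<lambda>p. u k $ i * cnj (Cv h u k p i j)) (Pk lam k))"
    unfolding adv_Cv by (simp only: cnj_sum infsum_cnj[symmetric] sum_distrib_left infsum_cmult_right'[symmetric])
    also have "\<dots> = (\<Sum>i\<in>UNIV. \<Sum>j\<in>UNIV. infsum (\<lambda>p. T3 u h i j (k, p)) (Pk lam k))"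
      by (simp add: T3_def)
  also have "\<dots> = infsum (\<lambda>p. S3 u h (k, p)) (Pk lam k)"
    unfolding S3_def by (rule infsum_sum2(2)[symmetric]) (auto intro: s)
  finally show ?thesis .
qed

lemma real_cnj: "reality_vec lam u \<Longrightarrow> q \<in> Lam3 lam \<Longrightarrow> cnj (u q $ i) = u (- q) $ i"
  unfolding reality_vec_def by auto

lemma div_sum: "divergence u p = 0 \<Longrightarrow> (\<Sum>j\<in>UNIV. complex_of_real (p $ j) * u p $ j) = 0"
  unfolding divergence_def by simp

lemma pt1:
  assumes R: "\<And>j. cnj (u (- p) $ j) = u p $ j"
  shows "T1 u h i j (k, p) + T2 u h i j (k - p, - p)
       = - (\<i> * u (k - p) $ i * cnj (h k $ i)) * (complex_of_real (p $ j) * u p $ j)"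
proof -
  have e: "k - p - - p = k" by simp
  have "T2 u h i j (k - p, - p) = u (k - p) $ i * (u p $ j * (- \<i> * complex_of_real (k $ j) * cnj (h k $ i)))"
    unfolding T2_def Cv_def by (simp add: e R)
  moreover have "T1 u h i j (k, p) = u p $ j * (\<i> * (complex_of_real (k $ j) - complex_of_real (p $ j)) * u (k - p) $ i) * cnj (h k $ i)"
    unfolding T1_def Cv_def by simp
  ultimately show ?thesis by (simp add: algebra_simps)
qed

lemma pt3:
  assumes R1: "\<And>i. cnj (u (k - p) $ i) = u (p - k) $ i" and R2: "\<And>i. cnj (u (- k) $ i) = u k $ i"
  shows "T3 u h i j (k, p) + T3 u h i j (p - k, p)
       = (\<i> * u k $ i * u (p - k) $ i) * (complex_of_real (p $ j) * cnj (h p $ j))"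
proof -
  have e: "p - k - p = - k" by simp
  have "T3 u h i j (p - k, p) = u (p - k) $ i * (cnj (h p $ j) * (- \<i> * complex_of_real (- (k $ j)) * u k $ i))"
    unfolding T3_def Cv_def by (simp add: e R2)
  moreover have "T3 u h i j (k, p) = u k $ i * (cnj (h p $ j) * (- \<i> * (complex_of_real (k $ j) - complex_of_real (p $ j)) * u (p - k) $ i))"
    unfolding T3_def Cv_def by (simp add: R1)
  ultimately show ?thesis by (simp add: algebra_simps)
qed

lemma sym12:
  assumes gu: "good lam u" and gh: "good lam h"
  shows "infsum (S1 u h) (PP lam) + infsum (S2 u h) (PP lam) = 0"
proof -
  let ?g = "\<lambda>(k::real^3, p::real^3). (k - p, - p)"
  have inP: "?g x \<in> PP lam" if "x \<in> PP lam" for x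
    using that by (cases x) (auto simp: PP_iff Lam3_uminus)
  have inv: "?g (?g x) = x" for x by (cases x) auto
  have s2: "S2 u h summable_on PP lam" using S_summable[OF gu gh] by simp
  have s1: "S1 u h summable_on PP lam" using S_summable[OF gu gh] by simp
  have eqs: "infsum (S2 u h) (PP lam) = infsum (\<lambda>x. S2 u h (?g x)) (PP lam)"
    by (rule infsum_reindex_bij_witness[of "PP lam" ?g ?g]) (auto simp: inv inP)
  have s2g: "(\<lambda>x. S2 u h (?g x)) summable_on PP lam"
    using s2 by (subst summable_on_reindex_bij_witness[of "PP lam" ?g ?g]) (auto simp: inv inP)
  have pt: "S1 u h x + S2 u h (?g x) = 0" if "x \<in> PP lam" for x
  proof -
    obtain k p where x: "x = (k, p)" by (cases x)
    have p: "p \<in> Lam3 lam" using that x by (auto simp: PP_iff)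
    have R: "cnj (u (- p) $ j) = u p $ j" for j
      using real_cnj[of lam u "- p" j] gu Lam3_uminus[OF p] unfolding good_def by simp
    have D: "(\<Sum>j\<in>UNIV. complex_of_real (p $ j) * u p $ j) = 0"
      using gu p unfolding good_def by (auto intro: div_sum)
    have "S1 u h x + S2 u h (?g x) = (\<Sum>i\<in>UNIV. \<Sum>j\<in>UNIV. T1 u h i j (k, p) + T2 u h i j (k - p, - p))"
      unfolding S1_def S2_def x by (simp add: sum.distrib)
    also have "\<dots> = (\<Sum>i\<in>UNIV. \<Sum>j\<in>UNIV. - (\<i> * u (k - p) $ i * cnj (h k $ i)) * (complex_of_real (p $ j) * u p $ j))"
      using pt1[OF R] by simp
    also have "\<dots> = (\<Sum>i\<in>UNIV. - (\<i> * u (k - p) $ i * cnj (h k $ i))) * (\<Sum>j\<in>UNIV. complex_of_real (p $ j) * u p $ j)"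
      by (simp add: sum_product)
    also have "\<dots> = 0" using D by simp
    finally show ?thesis .
  qed
  have "infsum (S1 u h) (PP lam) + infsum (S2 u h) (PP lam) = infsum (\<lambda>x. S1 u h x + S2 u h (?g x)) (PP lam)"
    unfolding eqs by (rule infsum_add[OF s1 s2g, symmetric])
  also have "\<dots> = 0" using pt by (simp add: infsum_0)
  finally show ?thesis .
qed

lemma sym3:
  assumes gu: "good lam u" and gh: "good lam h"
  shows "infsum (S3 u h) (PP lam) = 0"
proof -
  let ?g = "\<lambda>(k::real^3, p::real^3). (p - k, p)"
  have inP: "?g x \<in> PP lam" if "x \<in> PP lam" for x
    using that by (cases x) (auto simp: PP_iff Lam3_uminus dest: Lam3_uminus)
  have inv: "?g (?g x) = x" for x by (cases x) auto
  have s3: "S3 u h summable_on PP lam" using S_summable[OF gu gh] by simp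
  have eqs: "infsum (S3 u h) (PP lam) = infsum (\<lambda>x. S3 u h (?g x)) (PP lam)"
    by (rule infsum_reindex_bij_witness[of "PP lam" ?g ?g]) (auto simp: inv inP)
  have s3g: "(\<lambda>x. S3 u h (?g x)) summable_on PP lam"
    using s3 by (subst summable_on_reindex_bij_witness[of "PP lam" ?g ?g]) (auto simp: inv inP)
  have pt: "S3 u h x + S3 u h (?g x) = 0" if "x \<in> PP lam" for x
  proof -
    obtain k p where x: "x = (k, p)" by (cases x)
    have k: "k \<in> Lam3 lam" and p: "p \<in> Lam3 lam" and kp: "k - p \<in> Lam3 lam"
      using that x by (auto simp: PP_iff)
    have R1: "cnj (u (k - p) $ i) = u (p - k) $ i" for i
      using real_cnj[of lam u "k - p" i] gu kp unfolding good_def by simp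
    have R2: "cnj (u (- k) $ i) = u k $ i" for i
      using real_cnj[of lam u "- k" i] gu Lam3_uminus[OF k] unfolding good_def by simp
    have D: "(\<Sum>j\<in>UNIV. complex_of_real (p $ j) * cnj (h p $ j)) = 0"
    proof -
      have "(\<Sum>j\<in>UNIV. complex_of_real (p $ j) * h p $ j) = 0"
        using gh p unfolding good_def by (auto intro: div_sum)
      hence "cnj (\<Sum>j\<in>UNIV. complex_of_real (p $ j) * h p $ j) = 0" by simp
      thus ?thesis by (simp add: cnj_sum)
    qed
    have "S3 u h x + S3 u h (?g x) = (\<Sum>i\<in>UNIV. \<Sum>j\<in>UNIV. T3 u h i j (k, p) + T3 u h i j (p - k, p))"
      unfolding S3_def x by (simp add: sum.distrib)
    also have "\<dots> = (\<Sum>i\<in>UNIV. \<Sum>j\<in>UNIV. (\<i> * u k $ i * u (p - k) $ i) * (complex_of_real (p $ j) * cnj (h p $ j)))"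
      using pt3[OF R1 R2] by simp
    also have "\<dots> = (\<Sum>i\<in>UNIV. \<i> * u k $ i * u (p - k) $ i) * (\<Sum>j\<in>UNIV. complex_of_real (p $ j) * cnj (h p $ j))"
      by (simp add: sum_product)
    also have "\<dots> = 0" using D by simp
    finally show ?thesis .
  qed
  have "2 * infsum (S3 u h) (PP lam) = infsum (S3 u h) (PP lam) + infsum (\<lambda>x. S3 u h (?g x)) (PP lam)"
    using eqs by simp
  also have "\<dots> = infsum (\<lambda>x. S3 u h x + S3 u h (?g x)) (PP lam)"
    by (rule infsum_add[OF s3 s3g, symmetric])
  also have "\<dots> = 0" using pt by (simp add: infsum_0)
  finally show ?thesis by simp
qed

lemma Vm_good:
  assumes lam: "lam > 1" and m: "m \<ge> 1" and V: "Vm lam m a"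
  shows "good lam a"
proof -
  have hm: "hm_finite lam m a" and a0: "a 0 = 0" using V unfolding Vm_def by auto
  show ?thesis unfolding good_def
    using V hm_l1[OF lam m hm a0] hm_h1[OF _ m hm a0] hm_l2(1)[OF _ hm a0] lam
    unfolding Vm_def by auto
qed

lemma grad_term:
  assumes "divergence h k = 0"
  shows "(\<Sum>i\<in>UNIV. grad P k $ i * cnj (h k $ i)) = 0"
proof -
  have "(\<Sum>j\<in>UNIV. complex_of_real (k $ j) * h k $ j) = 0" by (rule div_sum[OF assms])
  hence c: "(\<Sum>j\<in>UNIV. complex_of_real (k $ j) * cnj (h k $ j)) = 0"
    by (metis (no_types, lifting) cnj_sum complex_cnj_complex_of_real complex_cnj_mult complex_cnj_zero sum.cong)
  have "(\<Sum>i\<in>UNIV. grad P k $ i * cnj (h k $ i)) = (\<i> * P k) * (\<Sum>j\<in>UNIV. complex_of_real (k $ j) * cnj (h k $ j))"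
    unfolding grad_def by (simp add: sum_distrib_left algebra_simps)
  thus ?thesis using c by simp
qed

lemma deriv_zero:
  assumes lam: "lam > 1" and m: "m \<ge> 1"
    and Vu: "Vm lam m u" and Vu': "Vm lam m u'" and Vh: "Vm lam m h" and Vh': "Vm lam m h'"
    and euler: "\<forall>k \<in> Lam3 lam. k \<noteq> 0 \<longrightarrow> u' k + adv lam u u k = - grad P k"
    and heq: "\<forall>k \<in> Lam3 lam. k \<noteq> 0 \<longrightarrow> h' k + adv lam u h k - adv lam h u k = 0"
  shows "inner_field lam u' h + inner_field lam u h' = 0"
proof -
  have gu: "good lam u" and gh: "good lam h" using Vm_good lam m Vu Vh by auto
  have u0: "u 0 = 0" and u'0: "u' 0 = 0" and h0: "h 0 = 0"
    using Vu Vu' Vh unfolding Vm_def by auto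
  have divh: "divergence h k = 0" if "k \<in> Lam3 lam" for k using Vh that unfolding Vm_def by auto
  have s: "S1 u h summable_on PP lam" "S2 u h summable_on PP lam" "S3 u h summable_on PP lam"
    using S_summable[OF gu gh] by auto
  have A: "ipf u' h k = - infsum (\<lambda>p. S1 u h (k, p)) (Pk lam k)" if k: "k \<in> Lam3 lam" for k
  proof -
    have "ipf u' h k = - (\<Sum>i\<in>UNIV. adv lam u u k $ i * cnj (h k $ i))"
    proof (cases "k = 0")
      case True thus ?thesis unfolding ipf_def using u'0 h0 by simp
    next
      case False
      hence e: "u' k = - adv lam u u k - grad P k" using euler k by (auto simp: algebra_simps eq_neg_iff_add_eq_0)
      have "ipf u' h k = - (\<Sum>i\<in>UNIV. adv lam u u k $ i * cnj (h k $ i)) - (\<Sum>i\<in>UNIV. grad P k $ i * cnj (h k $ i))"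
        unfolding ipf_def e by (simp add: algebra_simps sum_subtractf sum_negf)
      thus ?thesis using grad_term[OF divh[OF k]] by simp
    qed
    thus ?thesis using Y1[OF gu gh k] by simp
  qed
  have B: "ipf u h' k = infsum (\<lambda>p. - S2 u h (k, p) + S3 u h (k, p)) (Pk lam k)" if k: "k \<in> Lam3 lam" for k
  proof -
    have "ipf u h' k = - (\<Sum>i\<in>UNIV. u k $ i * cnj (adv lam u h k $ i)) + (\<Sum>i\<in>UNIV. u k $ i * cnj (adv lam h u k $ i))"
    proof (cases "k = 0")
      case True thus ?thesis unfolding ipf_def using u0 by simp
    next
      case False
      hence e: "h' k = adv lam h u k - adv lam u h k" using heq k by (auto simp: algebra_simps)
      show ?thesis unfolding ipf_def e by (simp add: algebra_simps sum_subtractf sum_negf)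
    qed
    also have "\<dots> = - infsum (\<lambda>p. S2 u h (k, p)) (Pk lam k) + infsum (\<lambda>p. S3 u h (k, p)) (Pk lam k)"
      using Y2[OF gu gh k] Y3[OF gu gh k] by simp
    also have "\<dots> = infsum (\<lambda>p. - S2 u h (k, p) + S3 u h (k, p)) (Pk lam k)"
      using infsum_add[OF summable_on_uminus[THEN iffD2, OF sliceD[OF s(2) k]] sliceD[OF s(3) k]]
        infsum_uminus[of "\<lambda>p. S2 u h (k, p)"] by simp
    finally show ?thesis .
  qed
  have sG: "(\<lambda>x. - S2 u h x + S3 u h x) summable_on PP lam"
    by (rule summable_on_add[OF summable_on_uminus[THEN iffD2, OF s(2)] s(3)])
  have I1: "inner_field lam u' h = - infsum (S1 u h) (PP lam)"
  proof -
    have "inner_field lam u' h = infsum (\<lambda>k. - infsum (\<lambda>p. S1 u h (k, p)) (Pk lam k)) (Lam3 lam)"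
      unfolding inner_field_ipf by (rule infsum_cong) (rule A)
    also have "\<dots> = - infsum (\<lambda>k. infsum (\<lambda>p. S1 u h (k, p)) (Pk lam k)) (Lam3 lam)"
      by (rule infsum_uminus)
    also have "infsum (\<lambda>k. infsum (\<lambda>p. S1 u h (k, p)) (Pk lam k)) (Lam3 lam) = infsum (S1 u h) (PP lam)"
      unfolding PP_def by (rule infsum_Sigma_banach) (use s(1) in \<open>simp add: PP_def\<close>)
    finally show ?thesis .
  qed
  have I2: "inner_field lam u h' = - infsum (S2 u h) (PP lam) + infsum (S3 u h) (PP lam)"
  proof -
    have "inner_field lam u h' = infsum (\<lambda>k. infsum (\<lambda>p. - S2 u h (k, p) + S3 u h (k, p)) (Pk lam k)) (Lam3 lam)"
      unfolding inner_field_ipf by (rule infsum_cong) (rule B)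
    also have "\<dots> = infsum (\<lambda>x. - S2 u h x + S3 u h x) (PP lam)"
      using infsum_Sigma_banach[of "\<lambda>x. - S2 u h x + S3 u h x" "Lam3 lam" "Pk lam"] sG
      unfolding PP_def by simp
    also have "\<dots> = - infsum (S2 u h) (PP lam) + infsum (S3 u h) (PP lam)"
      using infsum_add[OF summable_on_uminus[THEN iffD2, OF s(2)] s(3)] infsum_uminus[of "S2 u h"] by simp
    finally show ?thesis .
  qed
  have e1: "infsum (S1 u h) (PP lam) = - infsum (S2 u h) (PP lam)"
    using sym12[OF gu gh] by (simp add: eq_neg_iff_add_eq_0)
  show ?thesis unfolding I1 I2 e1 sym3[OF gu gh] by simp
qed

lemma infsum_add5:
  fixes f1 f2 f3 f4 f5 :: "'a \<Rightarrow> complex"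
  assumes "f1 summable_on A" "f2 summable_on A" "f3 summable_on A" "f4 summable_on A" "f5 summable_on A"
  shows "infsum (\<lambda>k. f1 k + f2 k + f3 k + f4 k + f5 k) A
       = infsum f1 A + infsum f2 A + infsum f3 A + infsum f4 A + infsum f5 A"
proof -
  have s12: "(\<lambda>k. f1 k + f2 k) summable_on A" by (rule summable_on_add[OF assms(1,2)])
  have s123: "(\<lambda>k. f1 k + f2 k + f3 k) summable_on A" by (rule summable_on_add[OF s12 assms(3)])
  have s1234: "(\<lambda>k. f1 k + f2 k + f3 k + f4 k) summable_on A" by (rule summable_on_add[OF s123 assms(4)])
  show ?thesis
    by (simp add: infsum_add[OF s1234 assms(5)] infsum_add[OF s123 assms(4)]
        infsum_add[OF s12 assms(3)] infsum_add[OF assms(1,2)])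
qed

lemma ipf_alg:
  fixes \<delta> :: real
  assumes U: "U k = a k + \<delta> *\<^sub>R (e k + a' k)" and H: "H k = b k + \<delta> *\<^sub>R (f k + b' k)"
  shows "ipf U H k = ipf a b k + of_real \<delta> * (ipf e H k + ipf a' (\<lambda>k. H k - b k) k + ipf a f k + ipf a' b k + ipf a b' k)"
proof -
  have comp: "U k $ i * cnj (H k $ i) = a k $ i * cnj (b k $ i) + of_real \<delta> * (e k $ i * cnj (H k $ i)
      + a' k $ i * cnj (H k $ i - b k $ i) + a k $ i * cnj (f k $ i) + a' k $ i * cnj (b k $ i) + a k $ i * cnj (b' k $ i))" for i
  proof -
    have "U k $ i = a k $ i + \<delta> *\<^sub>R (e k $ i + a' k $ i)" using U by simp
    hence Ui: "U k $ i = a k $ i + of_real \<delta> * (e k $ i + a' k $ i)" by (simp add: scaleR_conv_of_real)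
    have "H k $ i = b k $ i + \<delta> *\<^sub>R (f k $ i + b' k $ i)" using H by simp
    hence Hi: "H k $ i = b k $ i + of_real \<delta> * (f k $ i + b' k $ i)" by (simp add: scaleR_conv_of_real)
    show ?thesis unfolding Ui Hi by (simp add: algebra_simps)
  qed
  show ?thesis unfolding ipf_def comp
    by (simp add: sum.distrib flip: sum_distrib_left)
qed

lemma convex_time_int: "convex (time_int T)"
proof (unfold convex_alt, intro ballI allI impI)
  fix x y v :: real
  assume "x \<in> time_int T" "y \<in> time_int T" and v': "0 \<le> v \<and> v \<le> 1"
  hence x: "0 \<le> x" "ereal x < T" and y: "0 \<le> y" "ereal y < T" and v: "0 \<le> v" "v \<le> 1"
    unfolding time_int_def by auto
  have le: "(1 - v) * x + v * y \<le> max x y"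
  proof -
    have "(1 - v) * x + v * y \<le> (1 - v) * max x y + v * max x y"
      using v by (intro add_mono mult_left_mono) auto
    thus ?thesis by (simp add: algebra_simps)
  qed
  have c0: "0 \<le> (1 - v) * x + v * y" using x y v by simp
  have cT: "ereal ((1 - v) * x + v * y) < T"
  proof (cases "x \<le> y")
    case True
    hence "(1 - v) * x + v * y \<le> y" using le by (simp add: max_def)
    hence "ereal ((1 - v) * x + v * y) \<le> ereal y" by simp
    thus ?thesis using y(2) by (rule le_less_trans)
  next
    case False
    hence "(1 - v) * x + v * y \<le> x" using le by (simp add: max_def)
    hence "ereal ((1 - v) * x + v * y) \<le> ereal x" by simp
    thus ?thesis using x(2) by (rule le_less_trans)
  qed
  show "(1 - v) *\<^sub>R x + v *\<^sub>R y \<in> time_int T"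
    unfolding time_int_def using c0 cT by simp
qed

lemma Vm_l2: "lam \<ge> 1 \<Longrightarrow> Vm lam m a \<Longrightarrow> l2 lam a"
  unfolding Vm_def l2_def using hm_l2(1) by blast

lemma Vm_hm: "Vm lam m a \<Longrightarrow> hm_finite lam m a" unfolding Vm_def by auto
lemma Vm_0: "Vm lam m a \<Longrightarrow> a 0 = 0" unfolding Vm_def by auto

lemma N2_le_hm: "lam \<ge> 1 \<Longrightarrow> hm_finite lam m a \<Longrightarrow> a 0 = 0 \<Longrightarrow> N2 lam a \<le> (hm_norm lam m a)^2"
  unfolding N2_def using hm_l2(2) by blast

lemma Gamma_deriv:
  fixes lam :: real and m :: nat and T :: ereal
    and u u' h h' :: "real \<Rightarrow> real^3 \<Rightarrow> complex^3"
    and p :: "real \<Rightarrow> real^3 \<Rightarrow> complex"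
  assumes lam: "lam > 1"
    and m: "m \<ge> 1"
    and u_C1: "C1_Vm lam m T u u'"
    and euler: "\<forall>t \<in> time_int T. \<forall>k \<in> Lam3 lam. k \<noteq> 0 \<longrightarrow>
                  u' t k + adv lam (u t) (u t) k = - grad (p t) k"
    and h_C1: "C1_Vm lam m T h h'"
    and h_eq: "\<forall>t \<in> time_int T. \<forall>k \<in> Lam3 lam. k \<noteq> 0 \<longrightarrow>
                  h' t k + adv lam (u t) (h t) k - adv lam (h t) (u t) k = 0"
    and t: "t \<in> time_int T"
  shows "((\<lambda>s. inner_field lam (u s) (h s)) has_derivative (\<lambda>_. 0)) (at t within time_int T)"
proof -
  let ?S = "time_int T"
  let ?G = "\<lambda>s. inner_field lam (u s) (h s)"
  have lam1: "lam \<ge> 1" using lam by simp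
  have Vus: "Vm lam m (u s)" "Vm lam m (h s)" if "s \<in> ?S" for s
    using u_C1 h_C1 that unfolding C1_Vm_def by auto
  have Vt: "Vm lam m (u t)" "Vm lam m (u' t)" "Vm lam m (h t)" "Vm lam m (h' t)"
    using u_C1 h_C1 t unfolding C1_Vm_def by auto
  define eu where "eu s = (\<lambda>k. (u s k - u t k) /\<^sub>R (s - t) - u' t k)" for s
  define eh where "eh s = (\<lambda>k. (h s k - h t k) /\<^sub>R (s - t) - h' t k)" for s
  have Lu: "((\<lambda>s. hm_norm lam m (eu s)) \<longlongrightarrow> 0) (at t within ?S)"
    using u_C1 t unfolding C1_Vm_def eu_def by auto
  have Lh: "((\<lambda>s. hm_norm lam m (eh s)) \<longlongrightarrow> 0) (at t within ?S)"
    using h_C1 t unfolding C1_Vm_def eh_def by auto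
  have D0: "inner_field lam (u' t) (h t) + inner_field lam (u t) (h' t) = 0"
    by (rule deriv_zero[OF lam m Vt(1) Vt(2) Vt(3) Vt(4)]) (use euler h_eq t in auto)
  have l2t: "l2 lam (u t)" "l2 lam (u' t)" "l2 lam (h t)" "l2 lam (h' t)"
    using Vt Vm_l2[OF lam1] by auto
  have hm_e: "hm_finite lam m (eu s) \<and> eu s 0 = 0 \<and> hm_finite lam m (eh s) \<and> eh s 0 = 0" if s: "s \<in> ?S" for s
  proof -
    have a: "hm_finite lam m (\<lambda>k. u s k - u t k)" by (rule hm_finite_diff[OF Vm_hm[OF Vus(1)[OF s]] Vm_hm[OF Vt(1)]])
    have b: "hm_finite lam m (\<lambda>k. h s k - h t k)" by (rule hm_finite_diff[OF Vm_hm[OF Vus(2)[OF s]] Vm_hm[OF Vt(3)]])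
    have "hm_finite lam m (eu s)" unfolding eu_def
      using hm_finite_diff[OF hm_finite_scale[OF a, of "inverse (s - t)"] Vm_hm[OF Vt(2)]] by simp
    moreover have "hm_finite lam m (eh s)" unfolding eh_def
      using hm_finite_diff[OF hm_finite_scale[OF b, of "inverse (s - t)"] Vm_hm[OF Vt(4)]] by simp
    moreover have "eu s 0 = 0" "eh s 0 = 0" unfolding eu_def eh_def
      using Vm_0[OF Vus(1)[OF s]] Vm_0[OF Vus(2)[OF s]] Vm_0[OF Vt(1)] Vm_0[OF Vt(2)] Vm_0[OF Vt(3)] Vm_0[OF Vt(4)] by auto
    ultimately show ?thesis by auto
  qed
  have l2e: "l2 lam (eu s)" "l2 lam (eh s)" if "s \<in> ?S" for s
    using hm_e[OF that] hm_l2(1)[OF lam1] unfolding l2_def by auto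
  define \<alpha> where "\<alpha> s = (hm_norm lam m (eu s))^2" for s
  define \<beta> where "\<beta> s = (hm_norm lam m (eh s))^2" for s
  define \<gamma> where "\<gamma> s = (s - t)^2 * (2 * \<beta> s + 2 * N2 lam (h' t))" for s
  define g where "g s = 3 * (sqrt (\<alpha> s) * sqrt (2 * N2 lam (h t) + 2 * \<gamma> s)
     + sqrt (N2 lam (u' t)) * sqrt (\<gamma> s) + sqrt (N2 lam (u t)) * sqrt (\<beta> s))" for s
  have bound: "norm (?G s - ?G t - 0) / norm (s - t) \<le> g s" if s: "s \<in> ?S" "s \<noteq> t" for s
  proof -
    define \<delta> where "\<delta> = s - t"
    have d0: "\<delta> \<noteq> 0" using s unfolding \<delta>_def by simp
    have Uk: "u s k = u t k + \<delta> *\<^sub>R (eu s k + u' t k)" for k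
      unfolding eu_def \<delta>_def using d0[unfolded \<delta>_def] by (simp add: scaleR_right_diff_distrib)
    have Hk: "h s k = h t k + \<delta> *\<^sub>R (eh s k + h' t k)" for k
      unfolding eh_def \<delta>_def using d0[unfolded \<delta>_def] by (simp add: scaleR_right_diff_distrib)
    have HB: "(\<lambda>k. h s k - h t k) = (\<lambda>k. \<delta> *\<^sub>R (eh s k + h' t k))" using Hk by auto
    have l2H: "l2 lam (h s)" using Vus(2)[OF s(1)] Vm_l2[OF lam1] by auto
    have l2HB: "l2 lam (\<lambda>k. h s k - h t k)" by (rule l2_diff[OF l2H l2t(3)])
    have eq: "?G s = ?G t + of_real \<delta> * (inner_field lam (eu s) (h s) + inner_field lam (u' t) (\<lambda>k. h s k - h t k)
        + inner_field lam (u t) (eh s) + inner_field lam (u' t) (h t) + inner_field lam (u t) (h' t))"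
    proof -
      have "?G s = infsum (\<lambda>k. ipf (u t) (h t) k + of_real \<delta> * (ipf (eu s) (h s) k + ipf (u' t) (\<lambda>k. h s k - h t k) k
          + ipf (u t) (eh s) k + ipf (u' t) (h t) k + ipf (u t) (h' t) k)) (Lam3 lam)"
        unfolding inner_field_ipf by (rule infsum_cong) (rule ipf_alg[OF Uk Hk])
      also have "\<dots> = ?G t + of_real \<delta> * (inner_field lam (eu s) (h s) + inner_field lam (u' t) (\<lambda>k. h s k - h t k)
        + inner_field lam (u t) (eh s) + inner_field lam (u' t) (h t) + inner_field lam (u t) (h' t))"
      proof -
        have s5: "(\<lambda>k. ipf (eu s) (h s) k + ipf (u' t) (\<lambda>k. h s k - h t k) k
          + ipf (u t) (eh s) k + ipf (u' t) (h t) k + ipf (u t) (h' t) k) summable_on Lam3 lam"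
          by (intro summable_on_add ipf_summable l2e s l2t l2H l2HB)
        show ?thesis
          unfolding inner_field_ipf
          apply (subst infsum_add[OF ipf_summable[OF l2t(1) l2t(3)] summable_on_cmult_right[OF s5]])
          apply (subst infsum_cmult_right')
          apply (subst infsum_add5)
          by (intro ipf_summable l2e s l2t l2H l2HB | rule refl)+
      qed
      finally show ?thesis .
    qed
    define I1 where "I1 = inner_field lam (eu s) (h s)"
    define I2 where "I2 = inner_field lam (u' t) (\<lambda>k. h s k - h t k)"
    define I3 where "I3 = inner_field lam (u t) (eh s)"
    have "?G s - ?G t = of_real \<delta> * (I1 + I2 + I3 + (inner_field lam (u' t) (h t) + inner_field lam (u t) (h' t)))"
      unfolding eq I1_def I2_def I3_def by (simp add: add.assoc)
    hence "?G s - ?G t = of_real \<delta> * (I1 + I2 + I3)" unfolding D0 by simp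
    hence "norm (?G s - ?G t - 0) = \<bar>\<delta>\<bar> * norm (I1 + I2 + I3)"
      by (simp only: diff_zero norm_mult norm_of_real)
    hence n: "norm (?G s - ?G t - 0) / norm (s - t) = norm (I1 + I2 + I3)"
      using d0 unfolding \<delta>_def by simp
    have N2H: "N2 lam (h s) \<le> 2 * N2 lam (h t) + 2 * \<gamma> s"
    proof -
      have "N2 lam (h s) = N2 lam (\<lambda>k. h t k + (h s k - h t k))" by simp
      also have "\<dots> \<le> 2 * N2 lam (h t) + 2 * N2 lam (\<lambda>k. h s k - h t k)"
        by (rule N2_add_le[OF l2t(3) l2HB])
      finally have 1: "N2 lam (h s) \<le> 2 * N2 lam (h t) + 2 * N2 lam (\<lambda>k. h s k - h t k)" .
      have "N2 lam (\<lambda>k. h s k - h t k) = \<delta>^2 * N2 lam (\<lambda>k. eh s k + h' t k)"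
        unfolding HB by (rule N2_scale)
      also have "\<dots> \<le> \<delta>^2 * (2 * N2 lam (eh s) + 2 * N2 lam (h' t))"
        by (intro mult_left_mono N2_add_le l2e s l2t) simp
      also have "\<dots> \<le> \<gamma> s"
        unfolding \<gamma>_def \<delta>_def \<beta>_def using N2_le_hm[OF lam1, of m "eh s"] hm_e[OF s(1)]
        by (intro mult_left_mono) auto
      finally have 2: "N2 lam (\<lambda>k. h s k - h t k) \<le> \<gamma> s" .
      show ?thesis using 1 2 by linarith
    qed
    have N2HB: "N2 lam (\<lambda>k. h s k - h t k) \<le> \<gamma> s"
    proof -
      have "N2 lam (\<lambda>k. h s k - h t k) = \<delta>^2 * N2 lam (\<lambda>k. eh s k + h' t k)"
        unfolding HB by (rule N2_scale)
      also have "\<dots> \<le> \<delta>^2 * (2 * N2 lam (eh s) + 2 * N2 lam (h' t))"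
        by (intro mult_left_mono N2_add_le l2e s l2t) simp
      also have "\<dots> \<le> \<gamma> s"
        unfolding \<gamma>_def \<delta>_def \<beta>_def using N2_le_hm[OF lam1, of m "eh s"] hm_e[OF s(1)]
        by (intro mult_left_mono) auto
      finally show ?thesis .
    qed
    have a1: "N2 lam (eu s) \<le> \<alpha> s" unfolding \<alpha>_def using N2_le_hm[OF lam1, of m "eu s"] hm_e[OF s(1)] by auto
    have b1: "N2 lam (eh s) \<le> \<beta> s" unfolding \<beta>_def using N2_le_hm[OF lam1, of m "eh s"] hm_e[OF s(1)] by auto
    have "norm I1 \<le> 3 * (sqrt (N2 lam (eu s)) * sqrt (N2 lam (h s)))"
      unfolding I1_def by (rule ip_bound[OF l2e(1)[OF s(1)] l2H])
    also have "\<dots> \<le> 3 * (sqrt (\<alpha> s) * sqrt (2 * N2 lam (h t) + 2 * \<gamma> s))"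
      using a1 N2H by (intro mult_left_mono mult_mono real_sqrt_le_mono) (auto simp: \<alpha>_def N2_nonneg)
    finally have n1: "norm I1 \<le> 3 * (sqrt (\<alpha> s) * sqrt (2 * N2 lam (h t) + 2 * \<gamma> s))" .
    have "norm I2 \<le> 3 * (sqrt (N2 lam (u' t)) * sqrt (N2 lam (\<lambda>k. h s k - h t k)))"
      unfolding I2_def by (rule ip_bound[OF l2t(2) l2HB])
    also have "\<dots> \<le> 3 * (sqrt (N2 lam (u' t)) * sqrt (\<gamma> s))"
      using N2HB by (intro mult_left_mono real_sqrt_le_mono) (auto simp: N2_nonneg)
    finally have n2: "norm I2 \<le> 3 * (sqrt (N2 lam (u' t)) * sqrt (\<gamma> s))" .
    have "norm I3 \<le> 3 * (sqrt (N2 lam (u t)) * sqrt (N2 lam (eh s)))"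
      unfolding I3_def by (rule ip_bound[OF l2t(1) l2e(2)[OF s(1)]])
    also have "\<dots> \<le> 3 * (sqrt (N2 lam (u t)) * sqrt (\<beta> s))"
      using b1 by (intro mult_left_mono real_sqrt_le_mono) (auto simp: N2_nonneg)
    finally have n3: "norm I3 \<le> 3 * (sqrt (N2 lam (u t)) * sqrt (\<beta> s))" .
    have "norm (I1 + I2 + I3) \<le> norm I1 + norm I2 + norm I3"
      by (metis norm_triangle_ineq add_right_mono order_trans)
    also have "\<dots> \<le> g s" unfolding g_def using n1 n2 n3 by (simp add: algebra_simps)
    finally show ?thesis using n by simp
  qed
  have gt: "(g \<longlongrightarrow> 0) (at t within ?S)"
  proof -
    have La: "(\<alpha> \<longlongrightarrow> 0) (at t within ?S)" unfolding \<alpha>_def using tendsto_power[OF Lu, of 2] by simp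
    have Lb: "(\<beta> \<longlongrightarrow> 0) (at t within ?S)" unfolding \<beta>_def using tendsto_power[OF Lh, of 2] by simp
    have Lg: "(\<gamma> \<longlongrightarrow> 0) (at t within ?S)" unfolding \<gamma>_def
      by (rule tendsto_eq_intros Lb refl | simp)+
    have "(g \<longlongrightarrow> 3 * (sqrt 0 * sqrt (2 * N2 lam (h t) + 2 * 0) + sqrt (N2 lam (u' t)) * sqrt 0 + sqrt (N2 lam (u t)) * sqrt 0)) (at t within ?S)"
      unfolding g_def by (intro tendsto_intros La Lb Lg)
    thus ?thesis by simp
  qed
  show ?thesis
    unfolding has_derivative_iff_norm
  proof (intro conjI bounded_linear_zero)
    show "((\<lambda>y. norm (?G y - ?G t - 0) / norm (y - t)) \<longlongrightarrow> 0) (at t within ?S)"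
    proof (rule Lim_null_comparison[OF _ gt])
      show "\<forall>\<^sub>F x in at t within ?S. norm (norm (?G x - ?G t - 0) / norm (x - t)) \<le> g x"
        unfolding eventually_at_filter using bound by (auto intro!: always_eventually)
    qed
  qed
qed

theorem theorem6:
  fixes lam :: real and m :: nat and T :: ereal
    and u u' h h' :: "real \<Rightarrow> real^3 \<Rightarrow> complex^3"
    and p :: "real \<Rightarrow> real^3 \<Rightarrow> complex"
  assumes lam: "admissible_lambda lam"
    and m: "m \<ge> 1"
    and u_C1: "C1_Vm lam m T u u'"
    and p_real: "\<forall>t \<in> time_int T. reality_scal lam (p t)"
    and euler: "\<forall>t \<in> time_int T. \<forall>k \<in> Lam3 lam. k \<noteq> 0 \<longrightarrow>
                  u' t k + adv lam (u t) (u t) k = - grad (p t) k"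
    and h_C1: "C1_Vm lam m T h h'"
    and h_eq: "\<forall>t \<in> time_int T. \<forall>k \<in> Lam3 lam. k \<noteq> 0 \<longrightarrow>
                  h' t k + adv lam (u t) (h t) k - adv lam (h t) (u t) k = 0"
  shows "\<forall>t1 \<in> time_int T. \<forall>t2 \<in> time_int T.
           inner_field lam (u t1) (h t1) = inner_field lam (u t2) (h t2)"
proof -
  have lam1: "lam > 1" by (rule adm_gt1[OF lam])
  have "\<exists>c. \<forall>x\<in>time_int T. inner_field lam (u x) (h x) = c"
  proof (rule has_derivative_zero_constant[OF convex_time_int])
    fix x assume "x \<in> time_int T"
    thus "((\<lambda>s. inner_field lam (u s) (h s)) has_derivative (\<lambda>_. 0)) (at x within time_int T)"
      by (rule Gamma_deriv[OF lam1 m u_C1 euler h_C1 h_eq])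
  qed
  thus ?thesis by auto
qed

end
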